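(* Let $S$ be a unilateral shift operator of any (nonzero) multiplicity acting on an infinite-dimensional Hilbert space. Then $\Lambda_k(S)=\mathbb{D}$ for all $k\in\mathbb{N}$.
   Context: $\mathbb{D}=\{z\in\mathbb{C}:|z|<1\}$. A shift of multiplicity $\dim\mathcal{K}$ is an operator unitarily equivalent to $S:\ell^2(\mathcal{K})\to\ell^2(\mathcal{K})$, $S(x_0,x_1,\dots)=(0,x_0,x_1,\dots)$, for a nonzero Hilbert space $\mathcal{K}$. For $T\in\mathcal{B}(\mathcal{L})$ and $k\in\mathbb{N}$, $\Lambda_k(T)=\{\lambda\in\mathbb{C}: PTP=\lambda P\text{ for some orthogonal projection } P \text{ of rank } k\}$. *)

theory Defs
  imports "HOL-Analysis.Analysis"
begin

text \<open>Square-summable complex families indexed by a type 'i: the Hilbert space l2('i).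
  Every complex Hilbert space is unitarily equivalent to such a space.\<close>

definition l2 :: "('i \<Rightarrow> complex) set" where
  "l2 = {f. (\<lambda>i. (cmod (f i))\<^sup>2) summable_on UNIV}"

definition l2_inner :: "('i \<Rightarrow> complex) \<Rightarrow> ('i \<Rightarrow> complex) \<Rightarrow> complex" where
  "l2_inner f g = infsum (\<lambda>i. cnj (f i) * g i) UNIV"

definition lspan :: "('i \<Rightarrow> complex) set \<Rightarrow> ('i \<Rightarrow> complex) set" where
  "lspan B = {(\<lambda>i. \<Sum>b\<in>B. c b * b i) | c. True}"

definition lin_indep :: "('i \<Rightarrow> complex) set \<Rightarrow> bool" where
  "lin_indep B \<longleftrightarrow> (\<forall>c. (\<lambda>i. \<Sum>b\<in>B. c b * b i) = (\<lambda>i. 0) \<longrightarrow> (\<forall>b\<in>B. c b = 0))"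

definition orth_proj :: "(('i \<Rightarrow> complex) \<Rightarrow> ('i \<Rightarrow> complex)) \<Rightarrow> bool" where
  "orth_proj P \<longleftrightarrow>
     (\<forall>x\<in>l2. P x \<in> l2) \<and>
     (\<forall>x\<in>l2. \<forall>y\<in>l2. \<forall>a b. P (\<lambda>i. a * x i + b * y i) = (\<lambda>i. a * P x i + b * P y i)) \<and>
     (\<forall>x\<in>l2. P (P x) = P x) \<and>
     (\<forall>x\<in>l2. \<forall>y\<in>l2. l2_inner (P x) y = l2_inner x (P y))"

definition has_rank :: "(('i \<Rightarrow> complex) \<Rightarrow> ('i \<Rightarrow> complex)) \<Rightarrow> nat \<Rightarrow> bool" where
  "has_rank P k \<longleftrightarrow>
     (\<exists>B. finite B \<and> card B = k \<and> lin_indep B \<and> P ` l2 = lspan B)"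

definition higher_rank_numrange ::
  "nat \<Rightarrow> (('i \<Rightarrow> complex) \<Rightarrow> ('i \<Rightarrow> complex)) \<Rightarrow> complex set" where
  "higher_rank_numrange k T =
     {\<mu>. \<exists>P. orth_proj P \<and> has_rank P k \<and> (\<forall>x\<in>l2. P (T (P x)) = (\<lambda>i. \<mu> * P x i))}"

text \<open>The unilateral shift of multiplicity dim(l2('j)) on l2(K), K = l2('j);
  l2(N, l2('j)) is identified with l2(N x 'j).\<close>

definition ushift :: "(nat \<times> 'j \<Rightarrow> complex) \<Rightarrow> (nat \<times> 'j \<Rightarrow> complex)" where
  "ushift x = (\<lambda>(n, j). if n = 0 then 0 else x (n - 1, j))"

end

theory Submission
  imports Defs
begin


lemma finsupp_has_sum:
  fixes g :: "'a \<Rightarrow> 'b::{comm_monoid_add, topological_space}"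
  assumes "finite F" "\<And>i. i \<notin> F \<Longrightarrow> g i = 0"
  shows "(g has_sum (\<Sum>i\<in>F. g i)) UNIV"
proof -
  have "(g has_sum (\<Sum>i\<in>F. g i)) F" using assms(1) by simp
  then show ?thesis using has_sum_cong_neutral[of UNIV F g g] assms(2) by auto
qed

lemma finsupp_infsum:
  fixes g :: "'a \<Rightarrow> 'b::{comm_monoid_add, t2_space}"
  assumes "finite F" "\<And>i. i \<notin> F \<Longrightarrow> g i = 0"
  shows "infsum g UNIV = (\<Sum>i\<in>F. g i)"
  using finsupp_has_sum[OF assms] by (rule infsumI)

lemma finsupp_l2:
  assumes "finite F" "\<And>i. i \<notin> F \<Longrightarrow> f i = 0"
  shows "f \<in> l2"
  unfolding l2_def using finsupp_has_sum[of F "\<lambda>i. (cmod (f i))\<^sup>2"] assms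
  by (auto simp: summable_on_def)

lemma inner_fin1:
  assumes "finite F" "\<And>i. i \<notin> F \<Longrightarrow> b i = 0"
  shows "l2_inner b y = (\<Sum>i\<in>F. cnj (b i) * y i)"
  unfolding l2_inner_def using assms by (intro finsupp_infsum) auto

lemma inner_fin2:
  assumes "finite F" "\<And>i. i \<notin> F \<Longrightarrow> b i = 0"
  shows "l2_inner y b = (\<Sum>i\<in>F. cnj (y i) * b i)"
  unfolding l2_inner_def using assms by (intro finsupp_infsum) auto

lemma prod_summable:
  assumes "x \<in> l2" "y \<in> l2"
  shows "(\<lambda>i. cnj (x i) * y i) summable_on UNIV"
proof -
  have S: "(\<lambda>i. (cmod (x i))\<^sup>2 + (cmod (y i))\<^sup>2) summable_on UNIV"
    using assms by (intro summable_on_add) (auto simp: l2_def)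
  have B: "cmod (x i) * cmod (y i) \<le> (cmod (x i))\<^sup>2 + (cmod (y i))\<^sup>2" for i
  proof -
    have "0 \<le> (cmod (x i) - cmod (y i))\<^sup>2" by simp
    moreover have "0 \<le> cmod (x i) * cmod (y i)" by simp
    ultimately show ?thesis unfolding power2_diff by linarith
  qed
  have "(\<lambda>i. norm (cnj (x i) * y i)) summable_on UNIV"
    apply (rule summable_on_comparison_test[OF S])
    apply (simp only: norm_mult complex_mod_cnj B)
    apply simp
    done
  then show ?thesis by (rule abs_summable_summable)
qed

definition shiftp :: "nat \<Rightarrow> (nat \<times> 'j \<Rightarrow> complex) \<Rightarrow> (nat \<times> 'j \<Rightarrow> complex)" where
  "shiftp p x = (\<lambda>(n, j). if n < p then 0 else x (n - p, j))"

lemma ushift_shiftp: "ushift = shiftp 1"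
  by (auto simp: fun_eq_iff ushift_def shiftp_def)

lemma has_sum_shift:
  fixes g :: "nat \<times> 'j \<Rightarrow> 'b::{comm_monoid_add, topological_space}"
  assumes "\<And>n j. n < p \<Longrightarrow> g (n, j) = 0"
  shows "(g has_sum s) UNIV \<longleftrightarrow> ((\<lambda>(n, j). g (n + p, j)) has_sum s) UNIV"
proof -
  define h :: "nat \<times> 'j \<Rightarrow> nat \<times> 'j" where "h = (\<lambda>(n, j). (n + p, j))"
  have inj: "inj_on h UNIV" by (auto simp: h_def inj_on_def)
  have img: "h ` UNIV = {(n, j). p \<le> n}"
  proof (auto simp: h_def)
    fix a b assume "p \<le> a"
    then show "(a, b) \<in> range (\<lambda>(n, j). (n + p, j))"
      by (intro image_eqI[of _ _ "(a - p, b)"]) auto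
  qed
  have "(g has_sum s) UNIV \<longleftrightarrow> (g has_sum s) (h ` UNIV)"
    by (rule has_sum_cong_neutral) (auto simp: img assms)
  also have "\<dots> \<longleftrightarrow> ((g \<circ> h) has_sum s) UNIV" by (rule has_sum_reindex[OF inj])
  also have "g \<circ> h = (\<lambda>(n, j). g (n + p, j))" by (auto simp: h_def fun_eq_iff)
  finally show ?thesis .
qed

lemma infsum_shift:
  fixes g :: "nat \<times> 'j \<Rightarrow> 'b::{comm_monoid_add, t2_space}"
  assumes "\<And>n j. n < p \<Longrightarrow> g (n, j) = 0"
  shows "infsum g UNIV = infsum (\<lambda>(n, j). g (n + p, j)) UNIV"
      and "g summable_on UNIV \<longleftrightarrow> (\<lambda>(n, j). g (n + p, j)) summable_on UNIV"
proof -
  show S: "g summable_on UNIV \<longleftrightarrow> (\<lambda>(n, j). g (n + p, j)) summable_on UNIV"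
    using has_sum_shift[of p g, OF assms] by (auto simp: summable_on_def)
  show "infsum g UNIV = infsum (\<lambda>(n, j). g (n + p, j)) UNIV"
  proof (cases "g summable_on UNIV")
    case True
    then show ?thesis using has_sum_shift[of p g, OF assms] has_sum_infsum infsumI by metis
  next
    case False
    then show ?thesis using S infsum_not_exists by metis
  qed
qed

lemma shiftp_inner: "l2_inner (shiftp p x) (shiftp p y) = l2_inner x y"
  unfolding l2_inner_def
  by (subst infsum_shift(1)[of p]) (auto simp: shiftp_def case_prod_unfold)

lemma shiftp_l2: "x \<in> l2 \<Longrightarrow> shiftp p x \<in> l2"
  unfolding l2_def mem_Collect_eq
  by (subst infsum_shift(2)[of p "\<lambda>i. (cmod (shiftp p x i))\<^sup>2"]) (auto simp: shiftp_def case_prod_unfold)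

lemma shiftp_norm: "infsum (\<lambda>i. (cmod (shiftp p x i))\<^sup>2) UNIV = infsum (\<lambda>i. (cmod (x i))\<^sup>2) UNIV"
  by (subst infsum_shift(1)[of p]) (auto simp: shiftp_def case_prod_unfold)

lemma cnj_mul_self: "cnj z * z = of_real ((cmod z)\<^sup>2)"
  by (metis complex_norm_square mult.commute)

lemma inner_self: assumes "x \<in> l2"
  shows "l2_inner x x = of_real (infsum (\<lambda>i. (cmod (x i))\<^sup>2) UNIV)"
proof -
  have S: "(\<lambda>i. (cmod (x i))\<^sup>2) summable_on UNIV" using assms by (simp add: l2_def)
  have "l2_inner x x = infsum (\<lambda>i. of_real ((cmod (x i))\<^sup>2)) UNIV"
    unfolding l2_inner_def by (simp only: cnj_mul_self)
  also have "\<dots> = of_real (infsum (\<lambda>i. (cmod (x i))\<^sup>2) UNIV)"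
    by (rule infsumI[OF has_sum_of_real[OF has_sum_infsum[OF S]]])
  finally show ?thesis .
qed

lemma inner_cnj: "l2_inner y x = cnj (l2_inner x y)"
proof -
  have "l2_inner y x = infsum (\<lambda>i. cnj (cnj (x i) * y i)) UNIV"
    unfolding l2_inner_def by (simp add: mult.commute)
  then show ?thesis unfolding l2_inner_def by (simp only: infsum_cnj)
qed

lemma no_eigen:
  assumes "\<forall>i. ushift x i = \<mu> * x i" "\<mu> \<noteq> 0"
  shows "x = (\<lambda>i. 0)"
proof -
  have "\<forall>j. x (n, j) = 0" for n
  proof (induction n)
    case 0
    show ?case
    proof
      fix j
      have "ushift x (0, j) = 0" by (simp add: ushift_def)
      then show "x (0, j) = 0" using assms by (metis mult_eq_0_iff)
    qed
  next
    case (Suc n)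
    show ?case
    proof
      fix j
      have "ushift x (Suc n, j) = x (n, j)" by (simp add: ushift_def)
      then show "x (Suc n, j) = 0" using assms Suc by (metis mult_eq_0_iff)
    qed
  qed
  then show ?thesis by (auto simp: fun_eq_iff)
qed

lemma subset_dir:
  assumes "k \<ge> 1" "\<mu> \<in> higher_rank_numrange k (ushift :: (nat \<times> 'j \<Rightarrow> complex) \<Rightarrow> _)"
  shows "cmod \<mu> < 1"
proof -
  obtain P :: "(nat \<times> 'j \<Rightarrow> complex) \<Rightarrow> _" where Po: "orth_proj P" and Pr: "has_rank P k"
    and PS: "\<forall>x\<in>l2. P (ushift (P x)) = (\<lambda>i. \<mu> * P x i)"
    using assms(2) by (auto simp: higher_rank_numrange_def)
  obtain B where fB: "finite B" and cB: "card B = k" and liB: "lin_indep B" and rB: "P ` l2 = lspan B"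
    using Pr by (auto simp: has_rank_def)
  have "B \<noteq> {}" using cB assms(1) by auto
  then obtain b where bB: "b \<in> B" by auto
  define c where "c = (\<lambda>b'. if b' = b then (1::complex) else 0)"
  have cb: "(\<lambda>i. \<Sum>b'\<in>B. c b' * b' i) = b"
  proof
    fix i
    have "c b' * b' i = (if b' = b then b i else 0)" for b' by (simp add: c_def)
    then show "(\<Sum>b'\<in>B. c b' * b' i) = b i" using fB bB by simp
  qed
  have "b \<in> lspan B" unfolding lspan_def using cb by blast
  then obtain z where z: "z \<in> l2" "b = P z" using rB by auto
  define x where "x = b"
  have xl2: "x \<in> l2" using z Po by (auto simp: orth_proj_def x_def)
  have Px: "P x = x" using z Po by (auto simp: orth_proj_def x_def)
  have xnz: "x \<noteq> (\<lambda>i. 0)"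
  proof
    assume "x = (\<lambda>i. 0)"
    then have "(\<lambda>i. \<Sum>b'\<in>B. c b' * b' i) = (\<lambda>i. 0)" using cb x_def by simp
    then have "c b = 0" using liB bB by (auto simp: lin_indep_def)
    then show False by (simp add: c_def)
  qed
  define y where "y = ushift x"
  have yl2: "y \<in> l2" using xl2 by (simp add: y_def ushift_shiftp shiftp_l2)
  have Py: "P y = (\<lambda>i. \<mu> * x i)" using PS xl2 Px by (metis y_def)
  define nx where "nx = infsum (\<lambda>i. (cmod (x i))\<^sup>2) UNIV"
  have ixx: "l2_inner x x = of_real nx" using inner_self[OF xl2] nx_def by simp
  have iyy: "l2_inner y y = of_real nx" using inner_self[OF yl2] nx_def
    by (simp add: y_def ushift_shiftp shiftp_norm)
  have ixy: "l2_inner x y = \<mu> * of_real nx"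
  proof -
    have "l2_inner x y = l2_inner (P x) y" using Px by simp
    also have "\<dots> = l2_inner x (P y)" using Po xl2 yl2 by (auto simp: orth_proj_def)
    also have "\<dots> = infsum (\<lambda>i. \<mu> * (cnj (x i) * x i)) UNIV"
      unfolding Py l2_inner_def by (simp add: algebra_simps)
    also have "\<dots> = \<mu> * l2_inner x x" unfolding l2_inner_def by (rule infsum_cmult_right')
    finally show ?thesis using ixx by simp
  qed
  have iyx: "l2_inner y x = cnj \<mu> * of_real nx" using inner_cnj[of y x] ixy by simp
  define w where "w = (\<lambda>i. y i - \<mu> * x i)"
  have gexp: "cnj (w i) * w i = cnj (y i) * y i + (- cnj \<mu>) * (cnj (x i) * y i)
     + ((- \<mu>) * (cnj (y i) * x i) + (cnj \<mu> * \<mu>) * (cnj (x i) * x i))" for i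
    by (simp add: w_def algebra_simps)
  have s1: "(\<lambda>i. cnj (y i) * y i) summable_on UNIV" by (rule prod_summable[OF yl2 yl2])
  have s2: "(\<lambda>i. (- cnj \<mu>) * (cnj (x i) * y i)) summable_on UNIV"
    by (rule summable_on_cmult_right[OF prod_summable[OF xl2 yl2]])
  have s3: "(\<lambda>i. (- \<mu>) * (cnj (y i) * x i)) summable_on UNIV"
    by (rule summable_on_cmult_right[OF prod_summable[OF yl2 xl2]])
  have s4: "(\<lambda>i. (cnj \<mu> * \<mu>) * (cnj (x i) * x i)) summable_on UNIV"
    by (rule summable_on_cmult_right[OF prod_summable[OF xl2 xl2]])
  have sg: "(\<lambda>i. cnj (w i) * w i) summable_on UNIV"
    unfolding gexp by (intro summable_on_add s1 s2 s3 s4)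
  have "infsum (\<lambda>i. cnj (w i) * w i) UNIV =
     l2_inner y y + (- cnj \<mu>) * l2_inner x y + ((- \<mu>) * l2_inner y x + (cnj \<mu> * \<mu>) * l2_inner x x)"
    unfolding gexp l2_inner_def
    by (simp only: infsum_add[OF summable_on_add[OF s1 s2] summable_on_add[OF s3 s4]]
        infsum_add[OF s1 s2] infsum_add[OF s3 s4] infsum_cmult_right')
  also have "\<dots> = of_real nx * (1 - cnj \<mu> * \<mu>)"
    unfolding ixx iyy ixy iyx by (simp add: algebra_simps)
  also have "\<dots> = of_real (nx * (1 - (cmod \<mu>)\<^sup>2))"
    by (simp add: cnj_mul_self)
  finally have gs: "infsum (\<lambda>i. cnj (w i) * w i) UNIV = of_real (nx * (1 - (cmod \<mu>)\<^sup>2))" .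
  have reg: "Re (cnj (w i) * w i) = (cmod (w i))\<^sup>2" for i by (simp add: cnj_mul_self)
  have sR: "(\<lambda>i. (cmod (w i))\<^sup>2) summable_on UNIV"
    using summable_on_Re[OF sg] by (simp only: reg)
  have iR: "infsum (\<lambda>i. (cmod (w i))\<^sup>2) UNIV = nx * (1 - (cmod \<mu>)\<^sup>2)"
    using infsum_Re[OF sg] gs by (simp only: reg) simp
  obtain i0 where i0: "x i0 \<noteq> 0" using xnz unfolding fun_eq_iff by auto
  have "(cmod (x i0))\<^sup>2 \<le> nx"
  proof -
    have "infsum (\<lambda>i. (cmod (x i))\<^sup>2) {i0} \<le> nx" unfolding nx_def
      by (rule infsum_mono_neutral) (use xl2 in \<open>auto simp: l2_def\<close>)
    then show ?thesis by simp
  qed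
  then have nxpos: "nx > 0" using i0 by (smt (verit) zero_less_norm_iff zero_less_power)
  show ?thesis
  proof (rule ccontr)
    assume "\<not> cmod \<mu> < 1"
    then have m1: "cmod \<mu> \<ge> 1" by simp
    then have "(cmod \<mu>)\<^sup>2 \<ge> 1" by (simp add: one_le_power)
    then have "nx * (1 - (cmod \<mu>)\<^sup>2) \<le> 0" using nxpos by (simp add: mult_nonneg_nonpos)
    then have "\<forall>i. (cmod (w i))\<^sup>2 = 0"
      using nonneg_infsum_le_0D[OF _ sR] iR by auto
    then have "\<forall>i. ushift x i = \<mu> * x i" by (auto simp: w_def y_def)
    moreover have "\<mu> \<noteq> 0" using m1 by auto
    ultimately have "x = (\<lambda>i. 0)" by (rule no_eigen)
    then show False using xnz by simp
  qed
qed

lemma construct: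
  fixes B :: "(nat \<times> 'j \<Rightarrow> complex) set" and F :: "(nat \<times> 'j) set"
  assumes finB: "finite B" and finF: "finite F"
    and supp: "\<And>b i. b \<in> B \<Longrightarrow> i \<notin> F \<Longrightarrow> b i = 0"
    and orth: "\<And>b b'. b \<in> B \<Longrightarrow> b' \<in> B \<Longrightarrow> l2_inner b b' = (if b = b' then 1 else 0)"
    and sh: "\<And>b b'. b \<in> B \<Longrightarrow> b' \<in> B \<Longrightarrow> l2_inner b (ushift b') = (if b = b' then \<mu> else 0)"
  shows "\<mu> \<in> higher_rank_numrange (card B) (ushift :: (nat \<times> 'j \<Rightarrow> complex) \<Rightarrow> _)"
proof -
  define lc where "lc = (\<lambda>c i. \<Sum>b\<in>B. c b * b i)"
  define P where "P = (\<lambda>y. lc (\<lambda>b. l2_inner b y))"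
  have inB: "l2_inner b y = (\<Sum>i\<in>F. cnj (b i) * y i)" if "b \<in> B" for b y
    by (rule inner_fin1[OF finF]) (use supp that in auto)
  have lc_supp: "lc c i = 0" if "i \<notin> F" for c i
    unfolding lc_def using supp[OF _ that] by (intro sum.neutral) simp
  have lc_l2: "lc c \<in> l2" for c by (rule finsupp_l2[OF finF lc_supp])
  have key: "l2_inner b' (lc c) = c b'" if "b' \<in> B" for b' c
  proof -
    have "l2_inner b' (lc c) = (\<Sum>i\<in>F. \<Sum>b\<in>B. c b * (cnj (b' i) * b i))"
      unfolding inB[OF that] lc_def by (simp add: sum_distrib_left algebra_simps)
    also have "\<dots> = (\<Sum>b\<in>B. c b * (\<Sum>i\<in>F. cnj (b' i) * b i))"
      by (subst sum.swap) (simp add: sum_distrib_left)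
    also have "\<dots> = (\<Sum>b\<in>B. c b * (if b' = b then 1 else 0))"
      using orth[OF that] inB[OF that] by (intro sum.cong) auto
    also have "\<dots> = c b'" using finB that by (simp add: if_distrib cong: if_cong)
    finally show ?thesis .
  qed
  have P_lc: "P (lc c) = lc c" for c
    unfolding P_def using key by (simp add: lc_def)
  have lin: "P (\<lambda>i. a * x i + b * y i) = (\<lambda>i. a * P x i + b * P y i)" for a b x y
  proof -
    have "l2_inner b' (\<lambda>i. a * x i + b * y i) = a * l2_inner b' x + b * l2_inner b' y"
      if "b' \<in> B" for b'
      unfolding inB[OF that] by (simp add: sum.distrib sum_distrib_left algebra_simps)
    then show ?thesis unfolding P_def lc_def
      by (auto simp: fun_eq_iff sum.distrib sum_distrib_left algebra_simps intro!: sum.cong)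
  qed
  have sa: "l2_inner (P x) y = l2_inner x (P y)" for x y
  proof -
    have "l2_inner (P x) y = (\<Sum>i\<in>F. cnj (P x i) * y i)"
      by (rule inner_fin1[OF finF]) (simp add: P_def lc_supp)
    also have "\<dots> = (\<Sum>b\<in>B. cnj (l2_inner b x) * (\<Sum>i\<in>F. cnj (b i) * y i))"
      unfolding P_def lc_def
      by (simp add: sum_distrib_left sum_distrib_right algebra_simps) (rule sum.swap)
    also have "\<dots> = (\<Sum>b\<in>B. (\<Sum>i\<in>F. b i * cnj (x i)) * l2_inner b y)"
      by (intro sum.cong refl) (simp add: inB mult.commute)
    also have "\<dots> = (\<Sum>i\<in>F. cnj (x i) * P y i)"
      unfolding P_def lc_def
      by (simp add: sum_distrib_left sum_distrib_right algebra_simps) (rule sum.swap)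
    also have "\<dots> = l2_inner x (P y)"
      by (rule inner_fin2[OF finF, symmetric]) (simp add: P_def lc_supp)
    finally show ?thesis .
  qed
  have op: "orth_proj P"
    unfolding orth_proj_def using lin sa P_lc lc_l2 by (simp add: P_def)
  have ush_lc: "ushift (lc c) = (\<lambda>i. \<Sum>b\<in>B. c b * ushift b i)" for c
    by (auto simp: fun_eq_iff ushift_def lc_def)
  have shk: "l2_inner b' (ushift (lc c)) = \<mu> * c b'" if "b' \<in> B" for b' c
  proof -
    have "l2_inner b' (ushift (lc c)) = (\<Sum>i\<in>F. \<Sum>b\<in>B. c b * (cnj (b' i) * ushift b i))"
      unfolding inB[OF that] ush_lc by (simp add: sum_distrib_left algebra_simps)
    also have "\<dots> = (\<Sum>b\<in>B. c b * (\<Sum>i\<in>F. cnj (b' i) * ushift b i))"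
      by (subst sum.swap) (simp add: sum_distrib_left)
    also have "\<dots> = (\<Sum>b\<in>B. c b * (if b' = b then \<mu> else 0))"
      using sh[OF that] inB[OF that] by (intro sum.cong) auto
    also have "\<dots> = \<mu> * c b'" using finB that by (simp add: if_distrib mult.commute cong: if_cong)
    finally show ?thesis .
  qed
  have psp: "\<forall>x\<in>l2. P (ushift (P x)) = (\<lambda>i. \<mu> * P x i)"
  proof
    fix x :: "nat \<times> 'j \<Rightarrow> complex"
    show "P (ushift (P x)) = (\<lambda>i. \<mu> * P x i)"
    proof -
      have lcc: "lc c = lc d" if "\<And>b. b \<in> B \<Longrightarrow> c b = d b" for c d
        unfolding lc_def using that by (auto intro!: sum.cong)
      have "P (ushift (P x)) = lc (\<lambda>b'. l2_inner b' (ushift (lc (\<lambda>b. l2_inner b x))))"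
        by (simp add: P_def)
      also have "\<dots> = lc (\<lambda>b'. \<mu> * l2_inner b' x)" by (rule lcc) (rule shk)
      also have "\<dots> = (\<lambda>i. \<mu> * P x i)"
        by (simp add: P_def lc_def sum_distrib_left algebra_simps)
      finally show ?thesis .
    qed
  qed
  have li: "lin_indep B"
    unfolding lin_indep_def
  proof (intro allI impI ballI)
    fix c b assume h: "(\<lambda>i. \<Sum>b\<in>B. c b * b i) = (\<lambda>i. 0)" and b: "b \<in> B"
    have "c b = l2_inner b (lc c)" using key[OF b] by simp
    also have "\<dots> = 0" unfolding lc_def h l2_inner_def by simp
    finally show "c b = 0" .
  qed
  have rng: "P ` l2 = lspan B"
  proof
    show "P ` l2 \<subseteq> lspan B"
    proof
      fix z assume "z \<in> P ` l2"
      then obtain y where "z = lc (\<lambda>b. l2_inner b y)" unfolding P_def by blast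
      then show "z \<in> lspan B" unfolding lspan_def lc_def
        by (intro CollectI exI[of _ "\<lambda>b. l2_inner b y"]) simp
    qed
    show "lspan B \<subseteq> P ` l2"
    proof
      fix z assume "z \<in> lspan B"
      then obtain c where "z = lc c" unfolding lspan_def lc_def by blast
      then show "z \<in> P ` l2" using P_lc lc_l2 by (metis image_eqI)
    qed
  qed
  have "has_rank P (card B)" unfolding has_rank_def using finB li rng by blast
  then show ?thesis unfolding higher_rank_numrange_def using op psp
    by blast
qed



lemma shiftp_comp: "shiftp p (shiftp q x) = shiftp (p + q) x"
  by (auto simp: fun_eq_iff shiftp_def)

lemma inner_zero: "(\<And>i. x i = 0 \<or> y i = 0) \<Longrightarrow> l2_inner x y = 0"
  unfolding l2_inner_def by (rule infsum_0) (metis complex_cnj_zero mult_eq_0_iff)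

lemma sum_prod_single:
  fixes j0 :: 'j
  shows "(\<Sum>i\<in>(\<lambda>n. (n, j0)) ` A. f i) = (\<Sum>n\<in>A. f (n, j0))"
  by (subst sum.reindex) (auto simp: inj_on_def)

lemma omega_pow: "cnj \<omega> * \<omega> = 1 \<Longrightarrow> cnj (cnj \<omega> ^ n) * cnj \<omega> ^ n = 1"
  by (simp add: power_mult_distrib[symmetric] mult.commute)

lemma block_vector:
  assumes "cmod \<mu> < 1"
  obtains v :: "nat \<Rightarrow> complex" and N :: nat where
    "\<And>n. n \<ge> N + 2 \<Longrightarrow> v n = 0"
    "(\<Sum>n<N+2. cnj (v n) * v n) = 1"
    "(\<Sum>n<N+2. cnj (v n) * (if n = 0 then 0 else v (n - 1))) = \<mu>"
proof -
  define r where "r = cmod \<mu>"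
  define \<omega> where "\<omega> = (if \<mu> = 0 then 1 else \<mu> / of_real r)"
  have r0: "0 \<le> r" "r < 1" using assms by (auto simp: r_def)
  have om: "\<omega> * of_real r = \<mu>" by (auto simp: \<omega>_def r_def)
  have omc: "cnj \<omega> * \<omega> = 1"
  proof (cases "\<mu> = 0")
    case True then show ?thesis by (simp add: \<omega>_def)
  next
    case False
    then have "r \<noteq> 0" by (simp add: r_def)
    have "cnj \<omega> * \<omega> = (cnj \<mu> * \<mu>) / (of_real r * of_real r)"
      using False by (simp add: \<omega>_def)
    also have "cnj \<mu> * \<mu> = of_real r * of_real r"
      unfolding cnj_mul_self r_def by (simp add: power2_eq_square)
    finally show ?thesis using \<open>r \<noteq> 0\<close> by simp
  qed
  obtain n0 :: nat where n0: "1 / (1 - r) < real n0" using reals_Archimedean2 by blast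
  define N where "N = n0 + 2"
  have N2: "N \<ge> 2" by (simp add: N_def)
  have NN: "real N * (1 - r) \<ge> 1"
  proof -
    have "1 / (1 - r) \<le> real N" using n0 by (simp add: N_def)
    then show ?thesis using r0 by (simp add: field_simps)
  qed
  define a2 where "a2 = r / (real N - 1)"
  have a20: "a2 \<ge> 0" using r0 N2 by (simp add: a2_def)
  have Na2: "real N * a2 \<le> 1"
  proof -
    have "real N * r \<le> real N - 1" using NN by (simp add: algebra_simps)
    then show ?thesis using N2 by (simp add: a2_def field_simps)
  qed
  define a where "a = sqrt a2"
  define b where "b = sqrt (1 - real N * a2)"
  have aa: "a * a = a2" using a20 by (simp add: a_def)
  have bb: "b * b = 1 - real N * a2" using Na2 by (simp add: b_def)
  define c :: "nat \<Rightarrow> complex" where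
    "c n = (if n < N then of_real a else if n = N + 1 then of_real b else 0)" for n
  define v where "v n = c n * cnj \<omega> ^ n" for n
  have vz: "v n = 0" if "n \<ge> N + 2" for n using that by (simp add: v_def c_def)
  have vv: "cnj (v n) * v n = cnj (c n) * c n" for n
  proof -
    have "cnj (v n) * v n = (cnj (c n) * c n) * (cnj (cnj \<omega> ^ n) * cnj \<omega> ^ n)"
      by (simp add: v_def algebra_simps)
    then show ?thesis using omega_pow[OF omc] by simp
  qed
  have S1: "(\<Sum>n<N+2. cnj (v n) * v n) = 1"
  proof -
    have "(\<Sum>n<N+2. cnj (v n) * v n) = (\<Sum>n<N. cnj (c n) * c n) + cnj (c N) * c N
       + cnj (c (Suc N)) * c (Suc N)"
      by (simp add: vv)
    also have "\<dots> = (\<Sum>n<N. of_real a2) + of_real (b * b)"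
      by (simp add: c_def aa[symmetric])
    also have "\<dots> = 1" by (simp add: bb)
    finally show ?thesis .
  qed
  define g where "g n = cnj (v n) * (if n = 0 then 0 else v (n - 1))" for n
  have gs: "g (Suc n) = of_real a2 * \<omega>" if "Suc n < N" for n
  proof -
    have "g (Suc n) = cnj (c (Suc n)) * c n * \<omega> * (cnj (cnj \<omega> ^ n) * cnj \<omega> ^ n)"
      by (simp add: g_def v_def algebra_simps)
    also have "\<dots> = of_real a2 * \<omega>" using that omega_pow[OF omc, of n]
      by (simp add: c_def aa[symmetric])
    finally show ?thesis .
  qed
  obtain M where M: "N = Suc M" using N2 by (cases N) auto
  have S2: "(\<Sum>n<N+2. g n) = \<mu>"
  proof -
    have "(\<Sum>n<N+2. g n) = (\<Sum>n<N. g n) + g N + g (Suc N)" by simp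
    also have "g N = 0" by (simp add: g_def v_def c_def)
    also have "g (Suc N) = 0" by (simp add: g_def v_def c_def)
    also have "(\<Sum>n<N. g n) = g 0 + (\<Sum>n<M. g (Suc n))"
      unfolding M by (rule sum.lessThan_Suc_shift)
    also have "(\<Sum>n<M. g (Suc n)) = (\<Sum>n<M. of_real a2 * \<omega>)"
      by (rule sum.cong) (auto simp: gs M)
    also have "g 0 = 0" by (simp add: g_def)
    finally have "(\<Sum>n<N+2. g n) = of_nat M * of_real a2 * \<omega>" by simp
    also have "of_nat M * of_real a2 = (of_real r :: complex)"
    proof -
      have "real M * a2 = r" using N2 M by (simp add: a2_def)
      then show ?thesis by (metis of_real_mult of_real_of_nat_eq)
    qed
    finally show ?thesis using om by (simp add: mult.commute)
  qed
  show ?thesis by (rule that[of N v]) (use vz S1 S2 g_def in auto)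
qed

lemma mono_L: "(m::nat) < m' \<Longrightarrow> m * L + L \<le> m' * L"
proof -
  assume "m < m'"
  then have "Suc m * L \<le> m' * L" by (intro mult_le_mono1) simp
  then show ?thesis by simp
qed

lemma super_dir:
  assumes "cmod \<mu> < 1"
  shows "\<mu> \<in> higher_rank_numrange k (ushift :: (nat \<times> 'j \<Rightarrow> complex) \<Rightarrow> _)"
proof -
  obtain v :: "nat \<Rightarrow> complex" and N where vz: "\<And>n. n \<ge> N + 2 \<Longrightarrow> v n = 0"
    and S1: "(\<Sum>n<N+2. cnj (v n) * v n) = 1"
    and S2: "(\<Sum>n<N+2. cnj (v n) * (if n = 0 then 0 else v (n - 1))) = \<mu>"
    using block_vector[OF assms] by blast
  define j0 :: 'j where "j0 = undefined"
  define L where "L = N + 3"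
  define u0 :: "nat \<times> 'j \<Rightarrow> complex" where "u0 = (\<lambda>(n, j). if j = j0 then v n else 0)"
  define u where "u m = shiftp (m * L) u0" for m
  have u_eq: "u m (n, j) = (if n < m * L then 0 else if j = j0 then v (n - m * L) else 0)" for m n j
    by (simp add: u_def shiftp_def u0_def)
  have su_eq: "ushift (u m) (n, j) =
      (if n < m * L + 1 then 0 else if j = j0 then v (n - m * L - 1) else 0)" for m n j
    by (auto simp: ushift_def u_eq)
  have u_nz: "j = j0 \<and> m * L \<le> n \<and> n < m * L + N + 2" if "u m (n, j) \<noteq> 0" for m n j
    using that vz[of "n - m * L"] unfolding u_eq
    by (cases "n < m * L"; cases "j = j0"; cases "N + 2 \<le> n - m * L") auto
  have su_nz: "j = j0 \<and> m * L + 1 \<le> n \<and> n < m * L + N + 3" if "ushift (u m) (n, j) \<noteq> 0" for m n j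
    using that vz[of "n - m * L - 1"] unfolding su_eq
    by (cases "n < m * L + 1"; cases "j = j0"; cases "N + 2 \<le> n - m * L - 1") auto
  define F0 where "F0 = (\<lambda>n. (n, j0)) ` {..<N+2}"
  have F0: "finite F0" "\<And>i. i \<notin> F0 \<Longrightarrow> u0 i = 0"
  proof -
    show "finite F0" by (simp add: F0_def)
    fix i assume i: "i \<notin> F0"
    obtain n j where ij: "i = (n, j)" by fastforce
    show "u0 i = 0"
    proof (cases "j = j0")
      case True
      then have "n \<ge> N + 2" using i ij by (auto simp: F0_def image_iff)
      then show ?thesis using vz ij True by (simp add: u0_def)
    qed (simp add: u0_def ij)
  qed
  have u00: "l2_inner u0 u0 = 1"
  proof -
    have "l2_inner u0 u0 = (\<Sum>i\<in>F0. cnj (u0 i) * u0 i)" by (rule inner_fin1[OF F0])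
    also have "\<dots> = (\<Sum>n<N+2. cnj (v n) * v n)"
      unfolding F0_def sum_prod_single by (simp add: u0_def)
    finally show ?thesis using S1 by simp
  qed
  have u0s: "l2_inner u0 (ushift u0) = \<mu>"
  proof -
    have "l2_inner u0 (ushift u0) = (\<Sum>i\<in>F0. cnj (u0 i) * ushift u0 i)" by (rule inner_fin1[OF F0])
    also have "\<dots> = (\<Sum>n<N+2. cnj (v n) * (if n = 0 then 0 else v (n - 1)))"
    proof -
      have "ushift u0 (n, j0) = (if n = 0 then 0 else v (n - 1))" for n
        by (simp add: u0_def ushift_def)
      then show ?thesis unfolding F0_def sum_prod_single by (simp add: u0_def)
    qed
    finally show ?thesis using S2 by simp
  qed
  have uu: "l2_inner (u m) (u m') = (if m = m' then 1 else 0)" for m m'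
  proof (cases "m = m'")
    case True
    then show ?thesis using u00 by (simp add: u_def shiftp_inner)
  next
    case False
    have "l2_inner (u m) (u m') = 0"
    proof (rule inner_zero)
      fix i :: "nat \<times> 'j"
      obtain n j where i: "i = (n, j)" by fastforce
      show "u m i = 0 \<or> u m' i = 0"
      proof (rule ccontr)
        assume "\<not> ?thesis"
        then have A: "m * L \<le> n \<and> n < m * L + N + 2" "m' * L \<le> n \<and> n < m' * L + N + 2"
          using u_nz[of m n j] u_nz[of m' n j] i by auto
        show False
        proof (cases "m < m'")
          case True then show False using mono_L[OF True, of L] A by (simp add: L_def)
        next
          case False then have "m' < m" using \<open>m \<noteq> m'\<close> by simp
          then show False using mono_L[of m' m L] A by (simp add: L_def)
        qed
      qed
    qed
    then show ?thesis using False by simp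
  qed
  have us: "l2_inner (u m) (ushift (u m')) = (if m = m' then \<mu> else 0)" for m m'
  proof (cases "m = m'")
    case True
    have "ushift (u m) = shiftp (m * L) (ushift u0)"
      by (simp add: u_def ushift_shiftp shiftp_comp add.commute)
    then show ?thesis using u0s True by (simp add: u_def shiftp_inner)
  next
    case False
    have "l2_inner (u m) (ushift (u m')) = 0"
    proof (rule inner_zero)
      fix i :: "nat \<times> 'j"
      obtain n j where i: "i = (n, j)" by fastforce
      show "u m i = 0 \<or> ushift (u m') i = 0"
      proof (rule ccontr)
        assume "\<not> ?thesis"
        then have A: "m * L \<le> n \<and> n < m * L + N + 2" "m' * L + 1 \<le> n \<and> n < m' * L + N + 3"
          using u_nz[of m n j] su_nz[of m' n j] i by auto
        show False
        proof (cases "m < m'")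
          case True then show False using mono_L[OF True, of L] A by (simp add: L_def)
        next
          case False then have "m' < m" using \<open>m \<noteq> m'\<close> by simp
          then show False using mono_L[of m' m L] A by (simp add: L_def)
        qed
      qed
    qed
    then show ?thesis using False by simp
  qed
  have inj: "inj u"
  proof (rule injI)
    fix m m' assume "u m = u m'"
    then have "l2_inner (u m) (u m') = 1" using uu[of m m] by simp
    then show "m = m'" using uu[of m m'] by (simp split: if_splits)
  qed
  define B where "B = u ` {..<k}"
  have cB: "card B = k" unfolding B_def using inj by (simp add: card_image inj_on_subset)
  define F where "F = (\<lambda>n. (n, j0)) ` {..<k * L}"
  have "\<mu> \<in> higher_rank_numrange (card B) (ushift :: (nat \<times> 'j \<Rightarrow> complex) \<Rightarrow> _)"
  proof (rule construct[of B F])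
    show "finite B" by (simp add: B_def)
    show "finite F" by (simp add: F_def)
    show "b i = 0" if bB: "b \<in> B" and iF: "i \<notin> F" for b i
    proof (rule ccontr)
      assume nz: "b i \<noteq> 0"
      obtain m where m: "m < k" "b = u m" using bB by (auto simp: B_def)
      obtain n j where i: "i = (n, j)" by fastforce
      have "j = j0 \<and> n < m * L + N + 2" using u_nz[of m n j] nz m i by auto
      moreover have "m * L + L \<le> k * L" using mono_L[OF m(1)] by simp
      ultimately have "i \<in> F" using i by (auto simp: F_def L_def)
      then show False using iF by simp
    qed
    show "l2_inner b b' = (if b = b' then 1 else 0)" if "b \<in> B" "b' \<in> B" for b b'
      using that uu inj by (auto simp: B_def inj_eq)
    show "l2_inner b (ushift b') = (if b = b' then \<mu> else 0)" if "b \<in> B" "b' \<in> B" for b b'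
      using that us inj by (auto simp: B_def inj_eq)
  qed
  then show ?thesis using cB by simp
qed

theorem lemma2p6:
  fixes k :: nat
  assumes "k \<ge> 1"
  shows "higher_rank_numrange k (ushift :: (nat \<times> 'j \<Rightarrow> complex) \<Rightarrow> _) = ball 0 1"
proof
  show "higher_rank_numrange k (ushift :: (nat \<times> 'j \<Rightarrow> complex) \<Rightarrow> _) \<subseteq> ball 0 1"
    using subset_dir[OF assms] by (auto simp: dist_norm)
  show "ball 0 1 \<subseteq> higher_rank_numrange k (ushift :: (nat \<times> 'j \<Rightarrow> complex) \<Rightarrow> _)"
    using super_dir by (auto simp: dist_norm)
qed

end
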